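(* Let $\mathcal{C}$ be a permutation class (resp. polyomino class) and let $\mathcal{M}$ be its canonical $m$-basis. Assume that for every $M\in\mathcal{M}$ there exists a permutation (resp. polyomino) $P$ such that $M\preccurlyeq P$ and $M'\not\preccurlyeq P$ for all $M'\in\mathcal{M}$ with $M'\neq M$. Then $\mathcal{M}$ is a minimal $m$-basis of $\mathcal{C}$, and consequently $\mathcal{C}$ has a unique minimal $m$-basis.
   Context: Binary matrices have entries in $\{0,1\}$; $M'\preccurlyeq M$ (submatrix order) means $M'$ is obtained from $M$ by deleting some rows and/or columns. A permutation $\sigma$ of $\{1,\dots,n\}$ is identified with its permutation matrix ($M_\sigma(i,j)=1$ iff $i=\sigma(j)$); a permutation class is a set of permutations closed under taking submatrices that are permutation matrices. A quasi-permutation matrix is a binary matrix with at most one $1$ per row and column. A polyomino is a finite edge-connected union of unit cells of $\mathbb{Z}^2$ up to translation, identified with the binary matrix of its minimal bounding rectangle ($1$ for cells, $0$ otherwise); a polyomino class is a set of polyominoes closed under taking submatrices that are polyominoes. $Av(\mathcal{M})$ denotes the set of permutations (resp. polyominoes) with no submatrix in $\mathcal{M}$. For a class $\mathcal{C}$, $\mathcal{C}^+$ is the set of binary matrices that are submatrices of some element of $\mathcal{C}$; the canonical $m$-basis of $\mathcal{C}$ is the set of $\preccurlyeq$-minimal quasi-permutation matrices (permutation case), resp. binary matrices (polyomino case), not in $\mathcal{C}^+$. An $m$-basis of $\mathcal{C}$ is an antichain $\mathcal{M}$ with $\mathcal{C}=Av(\mathcal{M})$. A minimal $m$-basis of $\mathcal{C}$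 is an $m$-basis $\mathcal{M}$ such that (1) no strict subset $\mathcal{M}'\subsetneq\mathcal{M}$ satisfies $\mathcal{C}=Av(\mathcal{M}')$, and (2) for every $M\in\mathcal{M}$ and every submatrix $M'\preccurlyeq M$, either $M'=M$ or $\mathcal{C}\neq Av\big((\mathcal{M}\setminus\{M\})\cup\{M'\}\big)$. *)

theory Defs
  imports "HOL-Combinatorics.Permutations"
begin

text \<open>A binary matrix is a triple (number of rows, number of columns, entries);
  entries are 0-indexed and required to be False outside the dimensions, so that
  HOL equality of triples is equality of matrices.\<close>
type_synonym bmat = "nat \<times> nat \<times> (nat \<Rightarrow> nat \<Rightarrow> bool)"

definition wf_bmat :: "bmat \<Rightarrow> bool" where
  "wf_bmat M \<longleftrightarrow> (case M of (m, n, f) \<Rightarrow> (\<forall>i j. f i j \<longrightarrow> i < m \<and> j < n))"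

definition submat :: "bmat \<Rightarrow> bmat \<Rightarrow> bool" (infix "\<preccurlyeq>" 50) where
  "M' \<preccurlyeq> M \<longleftrightarrow> wf_bmat M' \<and> wf_bmat M \<and>
     (case M' of (m', n', g) \<Rightarrow> case M of (m, n, f) \<Rightarrow>
       (\<exists>r c. strict_mono_on {..<m'} r \<and> r ` {..<m'} \<subseteq> {..<m} \<and>
              strict_mono_on {..<n'} c \<and> c ` {..<n'} \<subseteq> {..<n} \<and>
              (\<forall>i<m'. \<forall>j<n'. g i j = f (r i) (c j))))"

definition is_perm_mat :: "bmat \<Rightarrow> bool" where
  "is_perm_mat M \<longleftrightarrow> wf_bmat M \<and>
     (case M of (m, n, f) \<Rightarrow> m = n \<and>
        (\<exists>\<sigma>. \<sigma> permutes {..<n} \<and> (\<forall>i<n. \<forall>j<n. f i j = (i = \<sigma> j))))"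

definition is_quasi_perm_mat :: "bmat \<Rightarrow> bool" where
  "is_quasi_perm_mat M \<longleftrightarrow> wf_bmat M \<and>
     (case M of (m, n, f) \<Rightarrow>
        (\<forall>i j j'. f i j \<and> f i j' \<longrightarrow> j = j') \<and> (\<forall>i i' j. f i j \<and> f i' j \<longrightarrow> i = i'))"

definition cell_adj :: "(nat \<Rightarrow> nat \<Rightarrow> bool) \<Rightarrow> nat \<times> nat \<Rightarrow> nat \<times> nat \<Rightarrow> bool" where
  "cell_adj f a b \<longleftrightarrow> f (fst a) (snd a) \<and> f (fst b) (snd b) \<and>
     ((fst a = fst b \<and> (snd b = Suc (snd a) \<or> snd a = Suc (snd b))) \<or>
      (snd a = snd b \<and> (fst b = Suc (fst a) \<or> fst a = Suc (fst b))))"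

text \<open>A polyomino, identified with the binary matrix of its minimal bounding rectangle:
  nonempty, every row and column contains a cell, and the cells are edge-connected.\<close>
definition is_polyomino :: "bmat \<Rightarrow> bool" where
  "is_polyomino M \<longleftrightarrow> wf_bmat M \<and>
     (case M of (m, n, f) \<Rightarrow> 0 < m \<and> 0 < n \<and>
        (\<forall>i<m. \<exists>j. f i j) \<and> (\<forall>j<n. \<exists>i. f i j) \<and>
        (\<forall>a b. f (fst a) (snd a) \<and> f (fst b) (snd b) \<longrightarrow> (cell_adj f)\<^sup>*\<^sup>* a b))"

datatype setting = Perm | Poly

fun obj :: "setting \<Rightarrow> bmat \<Rightarrow> bool" where
  "obj Perm M = is_perm_mat M"
| "obj Poly M = is_polyomino M"

fun amb :: "setting \<Rightarrow> bmat \<Rightarrow> bool" where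
  "amb Perm M = is_quasi_perm_mat M"
| "amb Poly M = wf_bmat M"

definition is_class :: "setting \<Rightarrow> bmat set \<Rightarrow> bool" where
  "is_class s C \<longleftrightarrow> C \<subseteq> {P. obj s P} \<and> (\<forall>P\<in>C. \<forall>Q. obj s Q \<and> Q \<preccurlyeq> P \<longrightarrow> Q \<in> C)"

definition Av :: "setting \<Rightarrow> bmat set \<Rightarrow> bmat set" where
  "Av s \<M> = {P. obj s P \<and> (\<forall>M\<in>\<M>. \<not> M \<preccurlyeq> P)}"

definition cplus :: "bmat set \<Rightarrow> bmat set" where
  "cplus C = {M. \<exists>P\<in>C. M \<preccurlyeq> P}"

definition canonical_mbasis :: "setting \<Rightarrow> bmat set \<Rightarrow> bmat set" where
  "canonical_mbasis s C = {M. amb s M \<and> M \<notin> cplus C \<and>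
      (\<forall>M'. amb s M' \<and> M' \<notin> cplus C \<and> M' \<preccurlyeq> M \<longrightarrow> M' = M)}"

definition antichain_bm :: "bmat set \<Rightarrow> bool" where
  "antichain_bm \<M> \<longleftrightarrow> (\<forall>M\<in>\<M>. \<forall>M'\<in>\<M>. M \<preccurlyeq> M' \<longrightarrow> M = M')"

definition is_mbasis :: "setting \<Rightarrow> bmat set \<Rightarrow> bmat set \<Rightarrow> bool" where
  "is_mbasis s C \<M> \<longleftrightarrow> \<M> \<subseteq> {M. wf_bmat M} \<and> antichain_bm \<M> \<and> C = Av s \<M>"

definition is_minimal_mbasis :: "setting \<Rightarrow> bmat set \<Rightarrow> bmat set \<Rightarrow> bool" where
  "is_minimal_mbasis s C \<M> \<longleftrightarrow> is_mbasis s C \<M> \<and>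
     (\<forall>\<M>'. \<M>' \<subset> \<M> \<longrightarrow> C \<noteq> Av s \<M>') \<and>
     (\<forall>M\<in>\<M>. \<forall>M'. M' \<preccurlyeq> M \<longrightarrow> M' = M \<or> C \<noteq> Av s ((\<M> - {M}) \<union> {M'}))"

end

theory Submission
  imports Defs
begin

lemma smo_lower:
  fixes r :: "nat \<Rightarrow> nat"
  assumes "strict_mono_on {..<m} r" "i < m"
  shows "i \<le> r i"
  using assms(2)
proof (induction i)
  case 0 then show ?case by simp
next
  case (Suc i)
  then have "r i < r (Suc i)" using strict_mono_onD[OF assms(1), of i "Suc i"] by simp
  with Suc show ?case by simp
qed

lemma smo_upper:
  fixes r :: "nat \<Rightarrow> nat"
  assumes "strict_mono_on {..<m} r" "r ` {..<m} \<subseteq> {..<k}" 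
  shows "i < m \<Longrightarrow> r i + (m - i) \<le> k"
proof (induction "m - i" arbitrary: i)
  case 0 then show ?case by simp
next
  case (Suc d)
  show ?case
  proof (cases "Suc i < m")
    case True
    have "r i < r (Suc i)" using strict_mono_onD[OF assms(1), of i "Suc i"] True by simp
    moreover have "r (Suc i) + (m - Suc i) \<le> k" using Suc True by simp
    ultimately show ?thesis using True by simp
  next
    case False
    then have "m - i = 1" using Suc by simp
    moreover have "r i < k" using assms(2) Suc by auto
    ultimately show ?thesis by simp
  qed
qed

lemma smo_le:
  fixes r :: "nat \<Rightarrow> nat"
  assumes "strict_mono_on {..<m} r" "r ` {..<m} \<subseteq> {..<k}"
  shows "m \<le> k"
proof (cases "m = 0")
  case False
  then show ?thesis using smo_upper[OF assms, of 0] by simp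
qed simp

lemma smo_id:
  fixes r :: "nat \<Rightarrow> nat"
  assumes "strict_mono_on {..<m} r" "r ` {..<m} \<subseteq> {..<m}" "i < m"
  shows "r i = i"
  using smo_upper[OF assms(1,2) assms(3)] smo_lower[OF assms(1,3)] by simp

definition sz :: "bmat \<Rightarrow> nat" where "sz M = fst M + fst (snd M)"

lemma submat_refl: "wf_bmat M \<Longrightarrow> M \<preccurlyeq> M"
  unfolding submat_def
  by (cases M) (auto intro!: exI[of _ id] simp: strict_mono_on_def)

lemma submat_wf: "M' \<preccurlyeq> M \<Longrightarrow> wf_bmat M' \<and> wf_bmat M"
  unfolding submat_def by simp

lemma submat_trans:
  assumes "A \<preccurlyeq> B" "B \<preccurlyeq> D" shows "A \<preccurlyeq> D"
proof -
  obtain a1 a2 g where A: "A = (a1, a2, g)" by (cases A)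
  obtain b1 b2 h where B: "B = (b1, b2, h)" by (cases B)
  obtain d1 d2 f where D: "D = (d1, d2, f)" by (cases D)
  from assms(1) obtain r c where rc: "strict_mono_on {..<a1} r" "r ` {..<a1} \<subseteq> {..<b1}"
    "strict_mono_on {..<a2} c" "c ` {..<a2} \<subseteq> {..<b2}" "\<forall>i<a1. \<forall>j<a2. g i j = h (r i) (c j)"
    unfolding submat_def A B by auto
  from assms(2) obtain r' c' where rc': "strict_mono_on {..<b1} r'" "r' ` {..<b1} \<subseteq> {..<d1}"
    "strict_mono_on {..<b2} c'" "c' ` {..<b2} \<subseteq> {..<d2}" "\<forall>i<b1. \<forall>j<b2. h i j = f (r' i) (c' j)"
    unfolding submat_def B D by auto
  have "strict_mono_on {..<a1} (r' \<circ> r)"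
  proof (rule strict_mono_onI)
    fix i j assume h: "i \<in> {..<a1}" "j \<in> {..<a1}" "i < j"
    have "r i < r j" by (rule strict_mono_onD[OF rc(1) h])
    moreover have "r i \<in> {..<b1}" "r j \<in> {..<b1}" using h rc(2) by blast+
    ultimately show "(r' \<circ> r) i < (r' \<circ> r) j"
      using strict_mono_onD[OF rc'(1)] by simp
  qed
  moreover have "strict_mono_on {..<a2} (c' \<circ> c)"
  proof (rule strict_mono_onI)
    fix i j assume h: "i \<in> {..<a2}" "j \<in> {..<a2}" "i < j"
    have "c i < c j" by (rule strict_mono_onD[OF rc(3) h])
    moreover have "c i \<in> {..<b2}" "c j \<in> {..<b2}" using h rc(4) by blast+
    ultimately show "(c' \<circ> c) i < (c' \<circ> c) j"
      using strict_mono_onD[OF rc'(3)] by simp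
  qed
  moreover have "(r' \<circ> r) ` {..<a1} \<subseteq> {..<d1}" using rc(2) rc'(2) by auto
  moreover have "(c' \<circ> c) ` {..<a2} \<subseteq> {..<d2}" using rc(4) rc'(4) by auto
  moreover have "\<forall>i<a1. \<forall>j<a2. g i j = f ((r' \<circ> r) i) ((c' \<circ> c) j)"
  proof (intro allI impI)
    fix i j assume h: "i < a1" "j < a2"
    then have "r i < b1" "c j < b2" using rc(2,4) by blast+
    then show "g i j = f ((r' \<circ> r) i) ((c' \<circ> c) j)" using h rc(5) rc'(5) by simp
  qed
  ultimately have ex: "\<exists>r c. strict_mono_on {..<a1} r \<and> r ` {..<a1} \<subseteq> {..<d1} \<and>
    strict_mono_on {..<a2} c \<and> c ` {..<a2} \<subseteq> {..<d2} \<and> (\<forall>i<a1. \<forall>j<a2. g i j = f (r i) (c j))"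
    by blast
  have "wf_bmat A" "wf_bmat D" using assms submat_wf by blast+
  then show ?thesis using ex unfolding submat_def A D by simp
qed

lemma submat_sz:
  assumes "A \<preccurlyeq> B" shows "sz A \<le> sz B" "A \<noteq> B \<Longrightarrow> sz A < sz B"
proof -
  obtain a1 a2 g where A: "A = (a1, a2, g)" by (cases A)
  obtain b1 b2 h where B: "B = (b1, b2, h)" by (cases B)
  from assms obtain r c where rc: "strict_mono_on {..<a1} r" "r ` {..<a1} \<subseteq> {..<b1}"
    "strict_mono_on {..<a2} c" "c ` {..<a2} \<subseteq> {..<b2}" "\<forall>i<a1. \<forall>j<a2. g i j = h (r i) (c j)"
    and wf: "wf_bmat A" "wf_bmat B"
    unfolding submat_def A B by auto
  have le1: "a1 \<le> b1" by (rule smo_le[OF rc(1,2)])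
  have le2: "a2 \<le> b2" by (rule smo_le[OF rc(3,4)])
  show "sz A \<le> sz B" using le1 le2 by (simp add: sz_def A B)
  assume ne: "A \<noteq> B"
  show "sz A < sz B"
  proof (rule ccontr)
    assume "\<not> sz A < sz B"
    then have e1: "a1 = b1" and e2: "a2 = b2" using le1 le2 by (auto simp: sz_def A B)
    have "\<forall>i<a1. \<forall>j<a2. g i j = h i j"
      using rc(5) smo_id[OF rc(1)] smo_id[OF rc(3)] rc(2,4) e1 e2 by simp
    then have "g = h" using wf e1 e2 unfolding A B wf_bmat_def by (auto intro!: ext)
    then show False using ne e1 e2 A B by simp
  qed
qed

lemma submat_antisym: "A \<preccurlyeq> B \<Longrightarrow> B \<preccurlyeq> A \<Longrightarrow> A = B"
  using submat_sz by fastforce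

lemma quasi_sub:
  assumes "A \<preccurlyeq> B" "is_quasi_perm_mat B" shows "is_quasi_perm_mat A"
proof -
  obtain a1 a2 g where A: "A = (a1, a2, g)" by (cases A)
  obtain b1 b2 h where B: "B = (b1, b2, h)" by (cases B)
  from assms obtain r c where rc: "strict_mono_on {..<a1} r" "r ` {..<a1} \<subseteq> {..<b1}"
    "strict_mono_on {..<a2} c" "c ` {..<a2} \<subseteq> {..<b2}" "\<forall>i<a1. \<forall>j<a2. g i j = h (r i) (c j)"
    and wf: "wf_bmat A" "wf_bmat B"
    unfolding submat_def A B by auto
  have ir: "inj_on r {..<a1}" using rc(1) strict_mono_on_imp_inj_on by blast
  have ic: "inj_on c {..<a2}" using rc(3) strict_mono_on_imp_inj_on by blast
  have q: "\<forall>i j j'. h i j \<and> h i j' \<longrightarrow> j = j'" "\<forall>i i' j. h i j \<and> h i' j \<longrightarrow> i = i'"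
    using assms(2) unfolding B is_quasi_perm_mat_def by auto
  have wfg: "\<And>i j. g i j \<Longrightarrow> i < a1 \<and> j < a2" using wf unfolding A wf_bmat_def by auto
  have "\<forall>i j j'. g i j \<and> g i j' \<longrightarrow> j = j'"
  proof (intro allI impI)
    fix i j j' assume "g i j \<and> g i j'"
    then have h: "i < a1" "j < a2" "j' < a2" "g i j" "g i j'" using wfg by blast+
    then have "h (r i) (c j)" "h (r i) (c j')" using rc(5) by simp_all
    then have "c j = c j'" using q(1) by blast
    then show "j = j'" using ic h(2,3) unfolding inj_on_def by simp
  qed
  moreover have "\<forall>i i' j. g i j \<and> g i' j \<longrightarrow> i = i'"
  proof (intro allI impI)
    fix i i' j assume "g i j \<and> g i' j"
    then have h: "i < a1" "i' < a1" "j < a2" "g i j" "g i' j" using wfg by blast+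
    then have "h (r i) (c j)" "h (r i') (c j)" using rc(5) by simp_all
    then have "r i = r i'" using q(2) by blast
    then show "i = i'" using ir h(1,2) unfolding inj_on_def by simp
  qed
  ultimately show ?thesis using wf unfolding is_quasi_perm_mat_def A by simp
qed

lemma perm_quasi: "is_perm_mat M \<Longrightarrow> is_quasi_perm_mat M"
proof -
  assume a: "is_perm_mat M"
  obtain m n f where M: "M = (m, n, f)" by (cases M)
  from a obtain \<sigma> where s: "\<sigma> permutes {..<n}" "\<forall>i<n. \<forall>j<n. f i j = (i = \<sigma> j)" and e: "m = n"
    and wf: "wf_bmat M"
    unfolding is_perm_mat_def M by (simp only: prod.case) blast
  have wff: "\<And>i j. f i j \<Longrightarrow> i < n \<and> j < n" using wf e unfolding M wf_bmat_def by simp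
  have inj: "inj \<sigma>" using s(1) permutes_inj by blast
  have "\<forall>i j j'. f i j \<and> f i j' \<longrightarrow> j = j'"
  proof (intro allI impI)
    fix i j j' assume h: "f i j \<and> f i j'"
    then have "i = \<sigma> j" "i = \<sigma> j'" using wff s(2) by blast+
    then show "j = j'" using inj unfolding inj_def by simp
  qed
  moreover have "\<forall>i i' j. f i j \<and> f i' j \<longrightarrow> i = i'"
  proof (intro allI impI)
    fix i i' j assume h: "f i j \<and> f i' j"
    then have "i = \<sigma> j" "i' = \<sigma> j" using wff s(2) by blast+
    then show "i = i'" by simp
  qed
  ultimately show ?thesis using wf unfolding is_quasi_perm_mat_def M by simp
qed

lemma obj_amb: "M \<preccurlyeq> P \<Longrightarrow> obj s P \<Longrightarrow> amb s M"
  by (cases s) (auto intro: quasi_sub perm_quasi dest: submat_wf)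

lemma amb_wf: "amb s M \<Longrightarrow> wf_bmat M"
  by (cases s) (auto simp: is_quasi_perm_mat_def)

lemma amb_sub: "M' \<preccurlyeq> M \<Longrightarrow> amb s M \<Longrightarrow> amb s M'"
  by (cases s) (auto intro: quasi_sub dest: submat_wf)

lemma obj_amb': "obj s P \<Longrightarrow> amb s P"
  by (cases s) (auto intro: perm_quasi simp: is_polyomino_def)

lemma min_below:
  assumes "X \<in> S" "\<forall>Y\<in>S. wf_bmat Y"
  shows "\<exists>Y\<in>S. Y \<preccurlyeq> X \<and> (\<forall>Z\<in>S. Z \<preccurlyeq> Y \<longrightarrow> Z = Y)"
proof -
  have "X \<in> S \<and> X \<preccurlyeq> X" using assms submat_refl by blast
  then obtain Y where Y: "Y \<in> S \<and> Y \<preccurlyeq> X" and least: "\<forall>Z. Z \<in> S \<and> Z \<preccurlyeq> X \<longrightarrow> sz Y \<le> sz Z"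
    using ex_has_least_nat[of "\<lambda>Y. Y \<in> S \<and> Y \<preccurlyeq> X" X sz] by blast
  have "\<forall>Z\<in>S. Z \<preccurlyeq> Y \<longrightarrow> Z = Y"
  proof (intro ballI impI)
    fix Z assume "Z \<in> S" "Z \<preccurlyeq> Y"
    moreover then have "Z \<preccurlyeq> X" using Y submat_trans by blast
    ultimately have "sz Y \<le> sz Z" using least by blast
    then show "Z = Y" using submat_sz(2)[OF \<open>Z \<preccurlyeq> Y\<close>] by (meson not_le)
  qed
  then show ?thesis using Y by blast
qed

lemma below_K:
  assumes "amb s N" "N \<notin> cplus C"
  shows "\<exists>M\<in>canonical_mbasis s C. M \<preccurlyeq> N"
proof -
  let ?S = "{M. amb s M \<and> M \<notin> cplus C}"
  have "\<forall>Y\<in>?S. wf_bmat Y" using amb_wf by blast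
  then obtain Y where "Y \<in> ?S" "Y \<preccurlyeq> N" "\<forall>Z\<in>?S. Z \<preccurlyeq> Y \<longrightarrow> Z = Y"
    using min_below[of N ?S] assms by blast
  then have "Y \<in> canonical_mbasis s C" unfolding canonical_mbasis_def by blast
  then show ?thesis using \<open>Y \<preccurlyeq> N\<close> by blast
qed

lemma K_Av:
  assumes "is_class s C"
  shows "C = Av s (canonical_mbasis s C)"
proof
  show "C \<subseteq> Av s (canonical_mbasis s C)"
  proof
    fix P assume P: "P \<in> C"
    then have "obj s P" using assms unfolding is_class_def by blast
    moreover have "\<forall>M\<in>canonical_mbasis s C. \<not> M \<preccurlyeq> P"
      using P unfolding canonical_mbasis_def cplus_def by blast
    ultimately show "P \<in> Av s (canonical_mbasis s C)" unfolding Av_def by blast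
  qed
next
  show "Av s (canonical_mbasis s C) \<subseteq> C"
  proof
    fix P assume P: "P \<in> Av s (canonical_mbasis s C)"
    then have o: "obj s P" and n: "\<forall>M\<in>canonical_mbasis s C. \<not> M \<preccurlyeq> P" unfolding Av_def by blast+
    show "P \<in> C"
    proof (rule ccontr)
      assume "P \<notin> C"
      then have "P \<notin> cplus C" using assms o unfolding cplus_def is_class_def by blast
      then show False using below_K[OF obj_amb'[OF o]] n by blast
    qed
  qed
qed

theorem proposition7:
  fixes s :: setting and C :: "bmat set"
  assumes "is_class s C"
    and "\<forall>M\<in>canonical_mbasis s C. \<exists>P. obj s P \<and> M \<preccurlyeq> P \<and>
           (\<forall>M'\<in>canonical_mbasis s C. M' \<noteq> M \<longrightarrow> \<not> M' \<preccurlyeq> P)"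
  shows "is_minimal_mbasis s C (canonical_mbasis s C) \<and> (\<exists>!\<M>. is_minimal_mbasis s C \<M>)"
proof -
  define K where "K = canonical_mbasis s C"
  have hyp: "\<forall>M\<in>K. \<exists>P. obj s P \<and> M \<preccurlyeq> P \<and> (\<forall>M'\<in>K. M' \<noteq> M \<longrightarrow> \<not> M' \<preccurlyeq> P)"
    using assms(2) unfolding K_def .
  have KAv: "C = Av s K" using K_Av[OF assms(1)] unfolding K_def .
  have Kmem: "\<And>M. M \<in> K \<Longrightarrow> amb s M \<and> M \<notin> cplus C \<and>
      (\<forall>M'. amb s M' \<and> M' \<notin> cplus C \<and> M' \<preccurlyeq> M \<longrightarrow> M' = M)"
    unfolding K_def canonical_mbasis_def by blast
  have mb: "is_mbasis s C K"
    unfolding is_mbasis_def antichain_bm_def using KAv Kmem amb_wf by blast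
  have c1: "\<forall>\<M>'. \<M>' \<subset> K \<longrightarrow> C \<noteq> Av s \<M>'"
  proof (intro allI impI)
    fix \<M>' assume sub: "\<M>' \<subset> K"
    then obtain M where M: "M \<in> K" "M \<notin> \<M>'" by blast
    then obtain P where P: "obj s P" "M \<preccurlyeq> P" "\<forall>M'\<in>K. M' \<noteq> M \<longrightarrow> \<not> M' \<preccurlyeq> P"
      using hyp by blast
    have "\<M>' \<subseteq> K" using sub by blast
    have "\<forall>M'\<in>\<M>'. \<not> M' \<preccurlyeq> P"
    proof
      fix X assume X: "X \<in> \<M>'"
      then have "X \<in> K" "X \<noteq> M" using \<open>\<M>' \<subseteq> K\<close> M(2) by auto
      then show "\<not> X \<preccurlyeq> P" using P(3) by simp
    qed
    then have "P \<in> Av s \<M>'" unfolding Av_def using P(1) by blast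
    moreover have "P \<notin> C" using Kmem[OF M(1)] P(2) unfolding cplus_def by blast
    ultimately show "C \<noteq> Av s \<M>'" by blast
  qed
  have c2: "\<forall>M\<in>K. \<forall>M'. M' \<preccurlyeq> M \<longrightarrow> M' = M \<or> C \<noteq> Av s ((K - {M}) \<union> {M'})"
  proof (intro ballI allI impI)
    fix M M' assume M: "M \<in> K" and sub: "M' \<preccurlyeq> M"
    show "M' = M \<or> C \<noteq> Av s ((K - {M}) \<union> {M'})"
    proof (cases "M' \<in> cplus C")
      case True
      then obtain Q where Q: "Q \<in> C" "M' \<preccurlyeq> Q" unfolding cplus_def by blast
      then have "Q \<notin> Av s ((K - {M}) \<union> {M'})" unfolding Av_def by blast
      then show ?thesis using Q by blast
    next
      case False
      have "amb s M'" using amb_sub[OF sub] Kmem[OF M] by blast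
      then show ?thesis using Kmem[OF M] False sub by blast
    qed
  qed
  have minK: "is_minimal_mbasis s C K" unfolding is_minimal_mbasis_def using mb c1 c2 by blast
  have uniq: "N = K" if N: "is_minimal_mbasis s C N" for N
  proof -
    have NAv: "C = Av s N" and N1: "\<forall>\<M>'. \<M>' \<subset> N \<longrightarrow> C \<noteq> Av s \<M>'"
      and N2: "\<forall>M\<in>N. \<forall>M'. M' \<preccurlyeq> M \<longrightarrow> M' = M \<or> C \<noteq> Av s ((N - {M}) \<union> {M'})"
      using N unfolding is_minimal_mbasis_def is_mbasis_def by blast+
    have NK: "n \<in> K" if n: "n \<in> N" for n
    proof -
      have nc: "n \<notin> cplus C"
      proof
        assume "n \<in> cplus C"
        then obtain Q where "Q \<in> C" "n \<preccurlyeq> Q" unfolding cplus_def by blast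
        then show False using NAv n unfolding Av_def by blast
      qed
      have "\<exists>P. obj s P \<and> n \<preccurlyeq> P"
      proof (rule ccontr)
        assume no: "\<not> (\<exists>P. obj s P \<and> n \<preccurlyeq> P)"
        have "Av s (N - {n}) = Av s N" unfolding Av_def using no by blast
        moreover have "N - {n} \<subset> N" using n by blast
        ultimately show False using N1 NAv by metis
      qed
      then have an: "amb s n" using obj_amb by blast
      obtain M where M: "M \<in> K" "M \<preccurlyeq> n" using below_K[OF an nc] unfolding K_def by blast
      have MnC: "M \<notin> cplus C" using Kmem[OF M(1)] by blast
      have "C = Av s ((N - {n}) \<union> {M})"
      proof
        show "C \<subseteq> Av s ((N - {n}) \<union> {M})"
        proof
          fix P assume P: "P \<in> C"
          then have "P \<in> Av s N" using NAv by blast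
          moreover have "\<not> M \<preccurlyeq> P" using P MnC unfolding cplus_def by blast
          ultimately show "P \<in> Av s ((N - {n}) \<union> {M})" unfolding Av_def by blast
        qed
      next
        show "Av s ((N - {n}) \<union> {M}) \<subseteq> C"
        proof
          fix P assume P: "P \<in> Av s ((N - {n}) \<union> {M})"
          have "\<not> n \<preccurlyeq> P"
          proof
            assume "n \<preccurlyeq> P"
            then have "M \<preccurlyeq> P" using M(2) submat_trans by blast
            then show False using P unfolding Av_def by blast
          qed
          then have "P \<in> Av s N" using P unfolding Av_def by blast
          then show "P \<in> C" using NAv by blast
        qed
      qed
      then have "M = n" using N2 n M(2) by blast
      then show ?thesis using M(1) by simp
    qed
    have KN: "M \<in> N" if M: "M \<in> K" for M
    proof -
      obtain P where P: "obj s P" "M \<preccurlyeq> P" "\<forall>M'\<in>K. M' \<noteq> M \<longrightarrow> \<not> M' \<preccurlyeq> P"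
        using hyp M by blast
      have "P \<notin> C" using Kmem[OF M] P(2) unfolding cplus_def by blast
      then obtain n where "n \<in> N" "n \<preccurlyeq> P" using NAv P(1) unfolding Av_def by blast
      then show ?thesis using NK P(3) by metis
    qed
    show "N = K" using NK KN by blast
  qed
  show ?thesis using minK uniq unfolding K_def by blast
qed

end
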